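(* Let $|\Psi\rangle_{A\bar AE}$ be a pure (sub-)normalized state with $\mathcal H_A$ an $n$-qubit system. Let $\rho_{AE}:=\sum_z|z\rangle\langle z|_A\,{\rm Tr}_{\bar A}(|\Psi\rangle\langle\Psi|)\,|z\rangle\langle z|_A$ (the state after a $Z$-basis measurement of $A$), and define the phase distribution $\Pr(X=x):=\langle\tilde x|_A\rho^\Psi_A|\tilde x\rangle_A$ for $x\in\{0,1\}^n$, where $\rho^\Psi_A$ is the reduced state of $|\Psi\rangle$ on $A$. If $H_{1/2}(X)\le H^{\rm th}_{1/2}$ for a constant $H^{\rm th}_{1/2}$, then $$H_{\min}(\rho_{AE}|E)\ge n-H^{\rm th}_{1/2}.$$
   Context: $|z\rangle$ is the computational basis of $n$ qubits and $|\tilde x\rangle:=2^{-n/2}\sum_z(-1)^{x\cdot z}|z\rangle$. R\'enyi entropy of order $1/2$: $H_{1/2}(X):=2\log_2\sum_x\sqrt{\Pr(X=x)}$. $H_{\min}(\rho_{AE}|E)$ is the maximum $\lambda$ with $2^{-\lambda}I_A\otimes\sigma_E\ge\rho_{AE}$ for some normalized state $\sigma_E$. *)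

theory Defs
  imports Complex_Main "HOL-Library.Extended_Real"
begin

text \<open>Finite-dimensional operators are represented as complex-valued kernels
  M i j over a finite index set I.  The system A (n qubits) is indexed by
  z < 2^n (bit i of z is the i-th qubit); the systems Abar and E are indexed by
  arbitrary finite types 'b and 'e.\<close>

definition psd_on :: "'i set \<Rightarrow> ('i \<Rightarrow> 'i \<Rightarrow> complex) \<Rightarrow> bool" where
  "psd_on I M \<longleftrightarrow> (\<forall>v :: 'i \<Rightarrow> complex.
     Im (\<Sum>i\<in>I. \<Sum>j\<in>I. cnj (v i) * M i j * v j) = 0 \<and>
     Re (\<Sum>i\<in>I. \<Sum>j\<in>I. cnj (v i) * M i j * v j) \<ge> 0)"

definition density :: "('e::finite \<Rightarrow> 'e \<Rightarrow> complex) \<Rightarrow> bool" where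
  "density \<sigma> \<longleftrightarrow> psd_on UNIV \<sigma> \<and> (\<Sum>e\<in>UNIV. \<sigma> e e) = 1"

definition A_idx :: "nat \<Rightarrow> nat set" where
  "A_idx n = {..<2^n}"

text \<open>Conditional min-entropy H_min(rho_AE|E): supremum (= maximum, or +infinity
  for the zero operator) of lambda such that 2^(-lambda) I_A \<otimes> sigma_E \<ge> rho_AE.\<close>
definition Hmin :: "nat \<Rightarrow> (nat \<times> 'e::finite \<Rightarrow> nat \<times> 'e \<Rightarrow> complex) \<Rightarrow> ereal" where
  "Hmin n \<rho> = Sup {ereal l | l::real. \<exists>\<sigma>. density \<sigma> \<and>
     psd_on (A_idx n \<times> UNIV)
       (\<lambda>(z,e) (z',e'). complex_of_real (2 powr (-l)) * (if z = z' then 1 else 0) * \<sigma> e e'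
                        - \<rho> (z,e) (z',e'))}"

definition norm2 :: "nat \<Rightarrow> (nat \<Rightarrow> 'b::finite \<Rightarrow> 'e::finite \<Rightarrow> complex) \<Rightarrow> real" where
  "norm2 n \<psi> = (\<Sum>z\<in>A_idx n. \<Sum>a\<in>UNIV. \<Sum>e\<in>UNIV. (cmod (\<psi> z a e))\<^sup>2)"

definition ptrace_Abar :: "(nat \<Rightarrow> 'b::finite \<Rightarrow> 'e \<Rightarrow> complex) \<Rightarrow> (nat \<times> 'e \<Rightarrow> nat \<times> 'e \<Rightarrow> complex)" where
  "ptrace_Abar \<psi> = (\<lambda>(z,e) (z',e'). \<Sum>a\<in>UNIV. \<psi> z a e * cnj (\<psi> z' a e'))"

definition rho_AE :: "nat \<Rightarrow> (nat \<Rightarrow> 'b::finite \<Rightarrow> 'e \<Rightarrow> complex) \<Rightarrow> (nat \<times> 'e \<Rightarrow> nat \<times> 'e \<Rightarrow> complex)" where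
  "rho_AE n \<psi> = (\<lambda>(z,e) (z',e'). \<Sum>w\<in>A_idx n.
      (if z = w then 1 else 0) * ptrace_Abar \<psi> (w,e) (w,e') * (if w = z' then 1 else 0))"

definition rho_A :: "(nat \<Rightarrow> 'b::finite \<Rightarrow> 'e::finite \<Rightarrow> complex) \<Rightarrow> nat \<Rightarrow> nat \<Rightarrow> complex" where
  "rho_A \<psi> z z' = (\<Sum>a\<in>UNIV. \<Sum>e\<in>UNIV. \<psi> z a e * cnj (\<psi> z' a e))"

definition bdot :: "nat \<Rightarrow> nat \<Rightarrow> nat \<Rightarrow> nat" where
  "bdot n x z = (\<Sum>i<n. if bit x i \<and> bit z i then 1 else 0)"

definition xtilde :: "nat \<Rightarrow> nat \<Rightarrow> nat \<Rightarrow> complex" where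
  "xtilde n x z = complex_of_real (2 powr (- real n / 2) * (-1) ^ bdot n x z)"

definition phase_prob :: "nat \<Rightarrow> (nat \<Rightarrow> 'b::finite \<Rightarrow> 'e::finite \<Rightarrow> complex) \<Rightarrow> nat \<Rightarrow> real" where
  "phase_prob n \<psi> x = Re (\<Sum>z\<in>A_idx n. \<Sum>z'\<in>A_idx n.
      cnj (xtilde n x z) * rho_A \<psi> z z' * xtilde n x z')"

definition H_half :: "nat \<Rightarrow> (nat \<Rightarrow> real) \<Rightarrow> real" where
  "H_half n p = 2 * log 2 (\<Sum>x\<in>A_idx n. sqrt (p x))"

end

theory Submission imports Defs begin

lemma bdot_Suc: "bdot (Suc n) x z = (if odd x \<and> odd z then 1 else 0) + bdot n (x div 2) (z div 2)"
  unfolding bdot_def sum.lessThan_Suc_shift by (simp add: bit_0 bit_Suc)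

lemma sum_split2: "(\<Sum>x<2*(m::nat). f x) = (\<Sum>y<m. f (2*y) + f (2*y+1))"
  by (induction m) (simp_all add: sum.distrib ac_simps)

lemma bdot_0[simp]: "bdot 0 x z = 0" by (simp add: bdot_def)

lemma orth: "z < 2^n \<Longrightarrow> z' < 2^n \<Longrightarrow>
  (\<Sum>x<2^n. (-1::real)^(bdot n x z + bdot n x z')) = (if z = z' then 2^n else 0)"
proof (induction n arbitrary: z z')
  case 0
  then show ?case by simp
next
  case (Suc n)
  define u where "u = z div 2"
  define u' where "u' = z' div 2"
  have u: "u < 2^n" "u' < 2^n" using Suc.prems by (auto simp: u_def u'_def)
  define s where "s = (if odd z then 1 else 0) + (if odd z' then 1 else (0::nat))"
  have "(\<Sum>x<2^Suc n. (-1::real)^(bdot (Suc n) x z + bdot (Suc n) x z'))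
     = (\<Sum>y<2^n. (-1::real)^(bdot n y u + bdot n y u') + (-1)^s * (-1)^(bdot n y u + bdot n y u'))"
    unfolding power_Suc sum_split2
    by (intro sum.cong) (auto simp: bdot_Suc u_def u'_def s_def power_add)
  also have "\<dots> = (1 + (-1)^s) * (\<Sum>y<2^n. (-1::real)^(bdot n y u + bdot n y u'))"
    by (simp add: sum.distrib sum_distrib_left algebra_simps)
  also have "\<dots> = (1 + (-1)^s) * (if u = u' then 2^n else 0)"
    using Suc.IH[OF u] by simp
  also have "\<dots> = (if z = z' then 2^Suc n else 0)"
  proof -
    have zz: "z = 2*u + (if odd z then 1 else 0)" "z' = 2*u' + (if odd z' then 1 else 0)"
      by (auto simp: u_def u'_def)
    show ?thesis
      by (cases "odd z"; cases "odd z'"; cases "u = u'") (use zz in \<open>auto simp: s_def\<close>)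
  qed
  finally show ?case .
qed

definition chi :: "nat \<Rightarrow> (nat \<Rightarrow> 'b::finite \<Rightarrow> 'e::finite \<Rightarrow> complex) \<Rightarrow> nat \<Rightarrow> 'b \<Rightarrow> 'e \<Rightarrow> complex" where
  "chi n \<psi> x a e = (\<Sum>z\<in>A_idx n. xtilde n x z * \<psi> z a e)"

lemma xt_prod: "xtilde n x z * xtilde n x z' = of_real (2 powr (- real n) * (-1)^(bdot n x z + bdot n x z'))"
proof -
  have "2 powr (- real n / 2) * 2 powr (- real n / 2) = (2::real) powr (- real n)"
    by (simp add: powr_add[symmetric])
  then show ?thesis unfolding xtilde_def
    by (simp add: power_add algebra_simps flip: of_real_mult)
qed

lemma xt_orth: "z \<in> A_idx n \<Longrightarrow> z' \<in> A_idx n \<Longrightarrow>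
   (\<Sum>x\<in>A_idx n. xtilde n x z * xtilde n x z') = (if z = z' then 1 else 0)"
proof -
  assume a: "z \<in> A_idx n" "z' \<in> A_idx n"
  have "(\<Sum>x\<in>A_idx n. xtilde n x z * xtilde n x z')
     = of_real (2 powr (- real n) * (\<Sum>x<2^n. (-1::real)^(bdot n x z + bdot n x z')))"
    by (simp add: xt_prod A_idx_def sum_distrib_left)
  also have "\<dots> = of_real (2 powr (- real n) * (if z = z' then 2^n else 0))"
    using a by (simp add: orth A_idx_def)
  also have "\<dots> = (if z = z' then 1 else 0)"
    by (simp add: powr_minus powr_realpow field_simps)
  finally show ?thesis .
qed

lemma inversion: "z \<in> A_idx n \<Longrightarrow> (\<Sum>x\<in>A_idx n. xtilde n x z * chi n \<psi> x a e) = \<psi> z a e"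
proof -
  assume z: "z \<in> A_idx n"
  have "(\<Sum>x\<in>A_idx n. xtilde n x z * chi n \<psi> x a e)
      = (\<Sum>z'\<in>A_idx n. (\<Sum>x\<in>A_idx n. xtilde n x z * xtilde n x z') * \<psi> z' a e)"
    unfolding chi_def sum_distrib_left
    by (subst sum.swap) (simp add: sum_distrib_right mult.assoc)
  also have "\<dots> = (\<Sum>z'\<in>A_idx n. (if z = z' then \<psi> z' a e else 0))"
    by (intro sum.cong) (auto simp: xt_orth z)
  also have "\<dots> = \<psi> z a e" using z by (simp add: A_idx_def)
  finally show ?thesis .
qed

lemma qf: "(\<Sum>e\<in>UNIV. \<Sum>e'\<in>UNIV. cnj (w e) * (\<Sum>a\<in>UNIV. f a e * cnj (f a e')) * w e')
   = of_real (\<Sum>a\<in>(UNIV::'b::finite set). (cmod (\<Sum>e\<in>(UNIV::'e::finite set). cnj (w e) * f a e))\<^sup>2)"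
proof -
  have "of_real (\<Sum>a\<in>(UNIV::'b set). (cmod (\<Sum>e\<in>(UNIV::'e set). cnj (w e) * f a e))\<^sup>2)
     = (\<Sum>a\<in>UNIV. (\<Sum>e\<in>UNIV. cnj (w e) * f a e) * cnj (\<Sum>e\<in>UNIV. cnj (w e) * f a e))"
    unfolding of_real_sum complex_norm_square ..
  also have "\<dots> = (\<Sum>a\<in>UNIV. \<Sum>e\<in>UNIV. \<Sum>e'\<in>UNIV. cnj (w e) * f a e * (w e' * cnj (f a e')))"
    unfolding cnj_sum sum_product by simp
  also have "\<dots> = (\<Sum>e\<in>UNIV. \<Sum>a\<in>UNIV. \<Sum>e'\<in>UNIV. cnj (w e) * f a e * (w e' * cnj (f a e')))"
    by (rule sum.swap)
  also have "\<dots> = (\<Sum>e\<in>UNIV. \<Sum>e'\<in>UNIV. \<Sum>a\<in>UNIV. cnj (w e) * f a e * (w e' * cnj (f a e')))"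
    by (intro sum.cong refl sum.swap)
  also have "\<dots> = (\<Sum>e\<in>UNIV. \<Sum>e'\<in>UNIV. cnj (w e) * (\<Sum>a\<in>UNIV. f a e * cnj (f a e')) * w e')"
    by (intro sum.cong refl) (simp add: sum_distrib_left sum_distrib_right algebra_simps)
  finally show ?thesis by simp
qed

lemma phase: "phase_prob n \<psi> x = (\<Sum>a\<in>UNIV. \<Sum>e\<in>UNIV. (cmod (chi n \<psi> x a e))\<^sup>2)"
proof -
  have cx: "cnj (xtilde n x z) = xtilde n x z" for z by (simp add: xtilde_def)
  have "(\<Sum>z\<in>A_idx n. \<Sum>z'\<in>A_idx n. cnj (xtilde n x z) * rho_A \<psi> z z' * xtilde n x z')
     = (\<Sum>z\<in>A_idx n. \<Sum>z'\<in>A_idx n. \<Sum>a\<in>UNIV. \<Sum>e\<in>UNIV. xtilde n x z * \<psi> z a e * cnj (xtilde n x z' * \<psi> z' a e))"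
    unfolding rho_A_def cx
    by (intro sum.cong refl) (simp add: sum_distrib_left sum_distrib_right cx mult_ac)
  also have "\<dots> = (\<Sum>z\<in>A_idx n. \<Sum>a\<in>UNIV. \<Sum>e\<in>UNIV. \<Sum>z'\<in>A_idx n. xtilde n x z * \<psi> z a e * cnj (xtilde n x z' * \<psi> z' a e))"
    by (intro sum.cong refl, rule trans[OF sum.swap], intro sum.cong refl sum.swap)
  also have "\<dots> = (\<Sum>a\<in>UNIV. \<Sum>e\<in>UNIV. \<Sum>z\<in>A_idx n. \<Sum>z'\<in>A_idx n. xtilde n x z * \<psi> z a e * cnj (xtilde n x z' * \<psi> z' a e))"
    by (rule trans[OF sum.swap], intro sum.cong refl sum.swap)
  also have "\<dots> = (\<Sum>a\<in>UNIV. \<Sum>e\<in>UNIV. chi n \<psi> x a e * cnj (chi n \<psi> x a e))"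
    unfolding chi_def cnj_sum sum_product by simp
  also have "\<dots> = of_real (\<Sum>a\<in>UNIV. \<Sum>e\<in>UNIV. (cmod (chi n \<psi> x a e))\<^sup>2)"
    unfolding of_real_sum complex_norm_square ..
  finally show ?thesis unfolding phase_prob_def by simp
qed

lemma lin: "(\<Sum>e\<in>UNIV. \<Sum>e'\<in>UNIV. cnj (w e) * (\<Sum>x\<in>P. c x * K x e e') * w e')
   = (\<Sum>x\<in>P. c x * (\<Sum>e\<in>(UNIV::'e::finite set). \<Sum>e'\<in>UNIV. cnj (w e) * K x e e' * w e'))"
proof -
  have "(\<Sum>e\<in>UNIV. \<Sum>e'\<in>UNIV. cnj (w e) * (\<Sum>x\<in>P. c x * K x e e') * w e')
     = (\<Sum>e\<in>(UNIV::'e set). \<Sum>e'\<in>UNIV. \<Sum>x\<in>P. c x * (cnj (w e) * K x e e' * w e'))"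
    by (intro sum.cong refl) (simp add: sum_distrib_left sum_distrib_right mult_ac)
  also have "\<dots> = (\<Sum>e\<in>(UNIV::'e set). \<Sum>x\<in>P. \<Sum>e'\<in>UNIV. c x * (cnj (w e) * K x e e' * w e'))"
    by (intro sum.cong refl sum.swap)
  also have "\<dots> = (\<Sum>x\<in>P. \<Sum>e\<in>(UNIV::'e set). \<Sum>e'\<in>UNIV. c x * (cnj (w e) * K x e e' * w e'))"
    by (rule sum.swap)
  also have "\<dots> = (\<Sum>x\<in>P. c x * (\<Sum>e\<in>(UNIV::'e::finite set). \<Sum>e'\<in>UNIV. cnj (w e) * K x e e' * w e'))"
    by (simp add: sum_distrib_left)
  finally show ?thesis .
qed

lemma my_CS_sum:
  fixes a :: "'a \<Rightarrow> real"
  shows "(\<Sum>i\<in>I. a i * b i)\<^sup>2 \<le> (\<Sum>i\<in>I. (a i)\<^sup>2) * (\<Sum>i\<in>I. (b i)\<^sup>2)"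
proof (cases "(\<Sum>i\<in>I. (b i)\<^sup>2) > 0")
  case False
  then consider "\<And>i. i\<in>I \<Longrightarrow> b i = 0" | "infinite I"
    by (metis (mono_tags, lifting) sum_pos2 zero_le_power2 zero_less_power2)
  thus ?thesis
    by fastforce
next
  case True
  define r where "r \<equiv> (\<Sum>i\<in>I. a i * b i) / (\<Sum>i\<in>I. (b i)\<^sup>2)"
  have "0 \<le> (\<Sum>i\<in>I. (a i - r * b i)\<^sup>2)"
    by (simp add: sum_nonneg)
  also have "... = (\<Sum>i\<in>I. (a i)\<^sup>2) - 2 * r * (\<Sum>i\<in>I. a i * b i) + r\<^sup>2 * (\<Sum>i\<in>I. (b i)\<^sup>2)"
    by (simp add: algebra_simps power2_eq_square sum_distrib_left flip: sum.distrib)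
  also have "\<dots> = (\<Sum>i\<in>I. (a i)\<^sup>2) - ((\<Sum>i\<in>I. a i * b i))\<^sup>2 / (\<Sum>i\<in>I. (b i)\<^sup>2)"
    by (simp add: r_def power2_eq_square)
  finally have "0 \<le> (\<Sum>i\<in>I. (a i)\<^sup>2) - ((\<Sum>i\<in>I. a i * b i))\<^sup>2 / (\<Sum>i\<in>I. (b i)\<^sup>2)" .
  hence "((\<Sum>i\<in>I. a i * b i))\<^sup>2 / (\<Sum>i\<in>I. (b i)\<^sup>2) \<le> (\<Sum>i\<in>I. (a i)\<^sup>2)"
    by (simp add: le_diff_eq)
  thus "((\<Sum>i\<in>I. a i * b i))\<^sup>2 \<le> (\<Sum>i\<in>I. (a i)\<^sup>2) * (\<Sum>i\<in>I. (b i)\<^sup>2)"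
    by (simp add: pos_divide_le_eq True)
qed

lemma cs:
  fixes c b :: "nat \<Rightarrow> complex" and p :: "nat \<Rightarrow> real"
  assumes "finite X" "P \<subseteq> X" "\<And>x. x \<in> X \<Longrightarrow> x \<notin> P \<Longrightarrow> b x = 0" "\<And>x. x \<in> P \<Longrightarrow> p x > 0"
  shows "(cmod (\<Sum>x\<in>X. c x * b x))\<^sup>2 \<le> (\<Sum>x\<in>P. (cmod (c x))\<^sup>2 * sqrt (p x)) * (\<Sum>x\<in>P. (cmod (b x))\<^sup>2 / sqrt (p x))"
proof -
  define r where "r x = sqrt (sqrt (p x))" for x
  have r: "x \<in> P \<Longrightarrow> r x > 0" for x using assms(4) by (simp add: r_def)
  have "(\<Sum>x\<in>X. c x * b x) = (\<Sum>x\<in>P. c x * b x)"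
    using assms(1-3) by (intro sum.mono_neutral_right) auto
  then have "cmod (\<Sum>x\<in>X. c x * b x) \<le> (\<Sum>x\<in>P. cmod (c x) * cmod (b x))"
    by (metis (no_types, lifting) norm_mult norm_sum sum.cong)
  also have "\<dots> = (\<Sum>x\<in>P. (cmod (c x) * r x) * (cmod (b x) / r x))"
    using r by (intro sum.cong) (auto dest: r intro: less_imp_neq[symmetric])
  finally have "(cmod (\<Sum>x\<in>X. c x * b x))\<^sup>2 \<le> (\<Sum>x\<in>P. (cmod (c x) * r x) * (cmod (b x) / r x))\<^sup>2"
    by (intro power_mono) auto
  also have "\<dots> \<le> (\<Sum>x\<in>P. (cmod (c x) * r x)\<^sup>2) * (\<Sum>x\<in>P. (cmod (b x) / r x)\<^sup>2)"
    by (rule my_CS_sum)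
  also have "\<dots> = (\<Sum>x\<in>P. (cmod (c x))\<^sup>2 * sqrt (p x)) * (\<Sum>x\<in>P. (cmod (b x))\<^sup>2 / sqrt (p x))"
  proof -
    have "x \<in> P \<Longrightarrow> (r x)\<^sup>2 = sqrt (p x)" for x using assms(4)[of x] by (simp add: r_def)
    then show ?thesis by (simp add: power_mult_distrib power_divide)
  qed
  finally show ?thesis .
qed

lemma block:
  fixes v :: "nat \<times> 'e::finite \<Rightarrow> complex"
  assumes "finite U" "\<And>z z' e e'. z \<in> U \<Longrightarrow> z' \<in> U \<Longrightarrow> M (z,e) (z',e') = (if z = z' then K z e e' else 0)"
  shows "(\<Sum>i\<in>U \<times> UNIV. \<Sum>j\<in>U \<times> UNIV. cnj (v i) * M i j * v j)
     = (\<Sum>z\<in>U. \<Sum>e\<in>UNIV. \<Sum>e'\<in>UNIV. cnj (v (z,e)) * K z e e' * v (z,e'))"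
proof -
  have "(\<Sum>i\<in>U \<times> UNIV. \<Sum>j\<in>U \<times> UNIV. cnj (v i) * M i j * v j)
     = (\<Sum>z\<in>U. \<Sum>e\<in>UNIV. \<Sum>z'\<in>U. \<Sum>e'\<in>UNIV. cnj (v (z,e)) * M (z,e) (z',e') * v (z',e'))"
    by (simp add: sum.cartesian_product')
  also have "\<dots> = (\<Sum>z\<in>U. \<Sum>e\<in>UNIV. \<Sum>z'\<in>U. if z = z' then (\<Sum>e'\<in>UNIV. cnj (v (z,e)) * K z e e' * v (z,e')) else 0)"
    using assms(2) by (intro sum.cong refl) auto
  also have "\<dots> = (\<Sum>z\<in>U. \<Sum>e\<in>UNIV. \<Sum>e'\<in>UNIV. cnj (v (z,e)) * K z e e' * v (z,e'))"
    using assms(1) by (intro sum.cong refl) (simp add: sum.delta)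
  finally show ?thesis .
qed

lemma rho_block: "z \<in> A_idx n \<Longrightarrow> z' \<in> A_idx n \<Longrightarrow>
   rho_AE n \<psi> (z,e) (z',e') = (if z = z' then ptrace_Abar \<psi> (z,e) (z,e') else 0)"
  unfolding rho_AE_def by (auto simp: A_idx_def if_distrib cong: if_cong)

theorem mainTheorem6:
  fixes n :: nat and Hth :: real
    and \<psi> :: "nat \<Rightarrow> 'b::finite \<Rightarrow> 'e::finite \<Rightarrow> complex"
  assumes "norm2 n \<psi> \<le> 1"
    and "H_half n (phase_prob n \<psi>) \<le> Hth"
  shows "Hmin n (rho_AE n \<psi>) \<ge> ereal (real n - Hth)"
proof -
  define U where "U = A_idx n"
  have finU: "finite U" by (simp add: U_def A_idx_def)
  define p where "p = phase_prob n \<psi>"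
  define S where "S = (\<Sum>x\<in>U. sqrt (p x))"
  define P where "P = {x\<in>U. p x > 0}"
  define ch where "ch = chi n \<psi>"
  have p_eq: "p x = (\<Sum>a\<in>UNIV. \<Sum>e\<in>UNIV. (cmod (ch x a e))\<^sup>2)" for x
    by (simp add: p_def ch_def phase)
  have p_nn[simp]: "p x \<ge> 0" for x unfolding p_eq by (intro sum_nonneg) auto
  have chi0: "ch x a e = 0" if "p x = 0" for x a e
    using that unfolding p_eq by (simp add: sum_nonneg_eq_0_iff sum_nonneg)
  have finP: "finite P" and PU: "P \<subseteq> U" using finU by (auto simp: P_def)
  have SP: "(\<Sum>x\<in>P. sqrt (p x)) = S"
    unfolding S_def P_def using finU p_nn
    by (intro sum.mono_neutral_left) (auto simp: not_less intro: antisym)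
  have S_nn: "S \<ge> 0" unfolding S_def using p_nn by (intro sum_nonneg) auto
  define \<beta> where "\<beta> w x a = (\<Sum>e\<in>UNIV. cnj (w e) * ch x a e)" for w :: "'e \<Rightarrow> complex" and x a
  define qT where "qT w = (\<Sum>x\<in>P. (1 / sqrt (p x)) * (\<Sum>a\<in>(UNIV::'b set). (cmod (\<beta> w x a))\<^sup>2))" for w
  have qT_nn: "qT w \<ge> 0" for w unfolding qT_def by (intro sum_nonneg mult_nonneg_nonneg) auto
  define R where "R z w = (\<Sum>a\<in>(UNIV::'b set). (cmod (\<Sum>e\<in>UNIV. cnj (w e) * \<psi> z a e))\<^sup>2)" for z w
  have key: "R z w \<le> 2 powr (- real n) * S * qT w" if z: "z \<in> U" for z w
  proof -
    have exp: "(\<Sum>e\<in>UNIV. cnj (w e) * \<psi> z a e) = (\<Sum>x\<in>U. xtilde n x z * \<beta> w x a)" for a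
    proof -
      have "(\<Sum>e\<in>UNIV. cnj (w e) * \<psi> z a e) = (\<Sum>e\<in>UNIV. cnj (w e) * (\<Sum>x\<in>U. xtilde n x z * ch x a e))"
        using z by (simp add: inversion U_def ch_def)
      also have "\<dots> = (\<Sum>e\<in>UNIV. \<Sum>x\<in>U. xtilde n x z * (cnj (w e) * ch x a e))"
        by (simp add: sum_distrib_left mult_ac)
      also have "\<dots> = (\<Sum>x\<in>U. \<Sum>e\<in>UNIV. xtilde n x z * (cnj (w e) * ch x a e))"
        by (rule sum.swap)
      also have "\<dots> = (\<Sum>x\<in>U. xtilde n x z * \<beta> w x a)"
        by (simp add: \<beta>_def sum_distrib_left)
      finally show ?thesis .
    qed
    have xtn: "(cmod (xtilde n x z))\<^sup>2 = 2 powr (- real n)" for x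
    proof -
      have "(cmod (xtilde n x z))\<^sup>2 = (2 powr (- real n / 2))\<^sup>2"
        by (simp add: xtilde_def norm_mult power_mult_distrib norm_power)
      also have "\<dots> = 2 powr (- real n)"
        by (simp add: power2_eq_square powr_add[symmetric])
      finally show ?thesis .
    qed
    have bound: "(cmod (\<Sum>e\<in>UNIV. cnj (w e) * \<psi> z a e))\<^sup>2
        \<le> (2 powr (- real n) * S) * (\<Sum>x\<in>P. (cmod (\<beta> w x a))\<^sup>2 / sqrt (p x))" for a
    proof -
      have "(cmod (\<Sum>e\<in>UNIV. cnj (w e) * \<psi> z a e))\<^sup>2 = (cmod (\<Sum>x\<in>U. xtilde n x z * \<beta> w x a))\<^sup>2"
        by (simp add: exp)
      also have "\<dots> \<le> (\<Sum>x\<in>P. (cmod (xtilde n x z))\<^sup>2 * sqrt (p x)) * (\<Sum>x\<in>P. (cmod (\<beta> w x a))\<^sup>2 / sqrt (p x))"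
      proof (rule cs[OF finU PU])
        fix x assume "x \<in> U" "x \<notin> P"
        then have "p x = 0" using p_nn[of x] by (auto simp: P_def)
        then show "\<beta> w x a = 0" by (simp add: \<beta>_def chi0)
      qed (auto simp: P_def)
      also have "(\<Sum>x\<in>P. (cmod (xtilde n x z))\<^sup>2 * sqrt (p x)) = 2 powr (- real n) * S"
        by (simp add: xtn sum_distrib_left[symmetric] SP)
      finally show ?thesis .
    qed
    have "R z w \<le> (\<Sum>a\<in>(UNIV::'b set). (2 powr (- real n) * S) * (\<Sum>x\<in>P. (cmod (\<beta> w x a))\<^sup>2 / sqrt (p x)))"
      unfolding R_def by (intro sum_mono bound)
    also have "\<dots> = 2 powr (- real n) * S * (\<Sum>a\<in>(UNIV::'b set). \<Sum>x\<in>P. (cmod (\<beta> w x a))\<^sup>2 / sqrt (p x))"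
      by (simp add: sum_distrib_left)
    also have "(\<Sum>a\<in>(UNIV::'b set). \<Sum>x\<in>P. (cmod (\<beta> w x a))\<^sup>2 / sqrt (p x))
             = (\<Sum>x\<in>P. \<Sum>a\<in>(UNIV::'b set). (cmod (\<beta> w x a))\<^sup>2 / sqrt (p x))"
      by (rule sum.swap)
    also have "\<dots> = qT w"
      unfolding qT_def by (simp add: sum_divide_distrib[symmetric])
    finally show ?thesis .
  qed
  define T where "T e e' = (\<Sum>x\<in>P. complex_of_real (1 / sqrt (p x)) * (\<Sum>a\<in>(UNIV::'b set). ch x a e * cnj (ch x a e')))" for e e'
  have qfT: "(\<Sum>e\<in>UNIV. \<Sum>e'\<in>UNIV. cnj (w e) * T e e' * w e') = of_real (qT w)" for w
    unfolding T_def lin qf qT_def \<beta>_def by simp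
  have trT: "(\<Sum>e\<in>UNIV. T e e) = of_real S"
  proof -
    have "T e e = of_real (\<Sum>x\<in>P. (1 / sqrt (p x)) * (\<Sum>a\<in>(UNIV::'b set). (cmod (ch x a e))\<^sup>2))" for e
      unfolding T_def of_real_sum of_real_mult complex_norm_square ..
    then have "(\<Sum>e\<in>UNIV. T e e) = of_real (\<Sum>e\<in>UNIV. \<Sum>x\<in>P. (1 / sqrt (p x)) * (\<Sum>a\<in>(UNIV::'b set). (cmod (ch x a e))\<^sup>2))"
      by (simp add: of_real_sum)
    also have "(\<Sum>e\<in>UNIV. \<Sum>x\<in>P. (1 / sqrt (p x)) * (\<Sum>a\<in>(UNIV::'b set). (cmod (ch x a e))\<^sup>2))
       = (\<Sum>x\<in>P. (1 / sqrt (p x)) * (\<Sum>e\<in>UNIV. \<Sum>a\<in>(UNIV::'b set). (cmod (ch x a e))\<^sup>2))"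
      by (subst sum.swap) (simp add: sum_distrib_left)
    also have "\<dots> = (\<Sum>x\<in>P. (1 / sqrt (p x)) * p x)"
      unfolding p_eq by (simp add: sum.swap[of _ "UNIV::'e set"])
    also have "\<dots> = (\<Sum>x\<in>P. sqrt (p x))"
      by (intro sum.cong refl) (simp add: real_div_sqrt p_nn)
    finally show ?thesis using SP by simp
  qed
  define \<sigma> where "\<sigma> = (if S > 0 then (\<lambda>e e'. T e e' / of_real S) else (\<lambda>e e'. if e = e' \<and> e = undefined then 1 else 0))"
  define q\<sigma> where "q\<sigma> w = (if S > 0 then qT w / S else (cmod (w undefined))\<^sup>2)" for w :: "'e \<Rightarrow> complex"
  have qf\<sigma>: "(\<Sum>e\<in>UNIV. \<Sum>e'\<in>UNIV. cnj (w e) * \<sigma> e e' * w e') = of_real (q\<sigma> w)" for w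
  proof (cases "S > 0")
    case True
    have "(\<Sum>e\<in>UNIV. \<Sum>e'\<in>UNIV. cnj (w e) * \<sigma> e e' * w e') = (\<Sum>e\<in>UNIV. \<Sum>e'\<in>UNIV. cnj (w e) * T e e' * w e') / of_real S"
      using True by (simp add: \<sigma>_def sum_divide_distrib)
    then show ?thesis using True by (simp add: qfT q\<sigma>_def)
  next
    case False
    have "(\<Sum>e\<in>UNIV. \<Sum>e'\<in>UNIV. cnj (w e) * \<sigma> e e' * w e') = cnj (w undefined) * w undefined"
    proof -
      have "(\<Sum>e\<in>UNIV. \<Sum>e'\<in>UNIV. cnj (w e) * \<sigma> e e' * w e')
         = (\<Sum>e\<in>UNIV. if e = undefined then (\<Sum>e'\<in>UNIV. if e' = undefined then cnj (w e) * w e' else 0) else 0)"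
      proof -
        have "cnj (w e) * \<sigma> e e' * w e' = (if e = undefined then (if e' = undefined then cnj (w e) * w e' else 0) else 0)" for e e'
          using False by (auto simp: \<sigma>_def)
        then have "(\<Sum>e\<in>UNIV. \<Sum>e'\<in>UNIV. cnj (w e) * \<sigma> e e' * w e')
          = (\<Sum>e\<in>UNIV. \<Sum>e'\<in>UNIV. if e = undefined then (if e' = undefined then cnj (w e) * w e' else 0) else 0)"
          by simp
        also have "\<dots> = (\<Sum>e\<in>UNIV. if e = undefined then (\<Sum>e'\<in>UNIV. if e' = undefined then cnj (w e) * w e' else 0) else 0)"
          by (intro sum.cong refl) (cases "e = undefined"; simp)
        finally show ?thesis .
      qed
      also have "\<dots> = cnj (w undefined) * w undefined" by simp
      finally show ?thesis .
    qed
    then show ?thesis using False by (simp add: q\<sigma>_def complex_norm_square mult.commute del: of_real_power)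
  qed
  have q\<sigma>_nn: "q\<sigma> w \<ge> 0" for w using qT_nn S_nn by (simp add: q\<sigma>_def)
  have dens: "density \<sigma>"
  proof -
    have "(\<Sum>e\<in>UNIV. \<sigma> e e) = 1"
    proof (cases "S > 0")
      case True then show ?thesis by (simp add: \<sigma>_def sum_divide_distrib[symmetric] trT)
    next
      case False then show ?thesis by (simp add: \<sigma>_def)
    qed
    moreover have "psd_on UNIV \<sigma>"
      unfolding psd_on_def using qf\<sigma> q\<sigma>_nn by simp
    ultimately show ?thesis by (simp add: density_def)
  qed
  define c0 where "c0 = 2 powr (- (real n - Hth))"
  have c0_nn: "c0 \<ge> 0" by (simp add: c0_def)
  have cb: "2 powr (- real n) * S\<^sup>2 \<le> c0" if "S > 0"
  proof -
    have L: "2 * log 2 S \<le> Hth" using assms(2) by (simp add: H_half_def S_def p_def U_def)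
    have "S\<^sup>2 = 2 powr (log 2 S) * 2 powr (log 2 S)" using that by (simp add: power2_eq_square)
    also have "\<dots> = 2 powr (2 * log 2 S)" by (simp add: powr_add[symmetric])
    also have "\<dots> \<le> 2 powr Hth" using L by simp
    finally have "2 powr (- real n) * S\<^sup>2 \<le> 2 powr (- real n) * 2 powr Hth" by simp
    also have "\<dots> = c0" by (simp add: c0_def powr_add[symmetric])
    finally show ?thesis .
  qed
  have R\<sigma>: "R z w \<le> c0 * q\<sigma> w" if "z \<in> U" for z w
  proof (cases "S > 0")
    case True
    have "R z w \<le> 2 powr (- real n) * S * qT w" using key[OF that] .
    also have "\<dots> = (2 powr (- real n) * S\<^sup>2) * q\<sigma> w" using True by (simp add: q\<sigma>_def power2_eq_square)
    also have "\<dots> \<le> c0 * q\<sigma> w" using cb[OF True] q\<sigma>_nn by (intro mult_right_mono) auto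
    finally show ?thesis .
  next
    case False
    then have "S = 0" using S_nn by simp
    then have "R z w \<le> 0" using key[OF that] by simp
    also have "0 \<le> c0 * q\<sigma> w" using c0_nn q\<sigma>_nn by simp
    finally show ?thesis .
  qed
  have psd: "psd_on (A_idx n \<times> UNIV)
       (\<lambda>(z,e) (z',e'). complex_of_real (2 powr (- (real n - Hth))) * (if z = z' then 1 else 0) * \<sigma> e e'
                        - rho_AE n \<psi> (z,e) (z',e'))"
    unfolding psd_on_def
  proof
    fix v :: "nat \<times> 'e \<Rightarrow> complex"
    define K where "K z e e' = complex_of_real c0 * \<sigma> e e' - ptrace_Abar \<psi> (z,e) (z,e')" for z e e'
    have "(\<Sum>i\<in>A_idx n \<times> UNIV. \<Sum>j\<in>A_idx n \<times> UNIV. cnj (v i) *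
        (\<lambda>(z,e) (z',e'). complex_of_real (2 powr (- (real n - Hth))) * (if z = z' then 1 else 0) * \<sigma> e e'
                        - rho_AE n \<psi> (z,e) (z',e')) i j * v j)
      = (\<Sum>z\<in>U. \<Sum>e\<in>UNIV. \<Sum>e'\<in>UNIV. cnj (v (z,e)) * K z e e' * v (z,e'))"
      unfolding U_def
      by (rule block) (auto simp: A_idx_def rho_block K_def c0_def)
    also have "\<dots> = (\<Sum>z\<in>U. of_real (c0 * q\<sigma> (\<lambda>e. v (z,e)) - R z (\<lambda>e. v (z,e))))"
    proof (intro sum.cong refl)
      fix z
      have pt: "(\<Sum>e\<in>UNIV. \<Sum>e'\<in>UNIV. cnj (v (z,e)) * ptrace_Abar \<psi> (z,e) (z,e') * v (z,e'))
          = of_real (R z (\<lambda>e. v (z,e)))"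
        unfolding ptrace_Abar_def R_def using qf[of "\<lambda>e. v (z,e)" "\<lambda>a e. \<psi> z a e"] by simp
      have "(\<Sum>e\<in>UNIV. \<Sum>e'\<in>UNIV. cnj (v (z,e)) * K z e e' * v (z,e'))
         = of_real c0 * (\<Sum>e\<in>UNIV. \<Sum>e'\<in>UNIV. cnj (v (z,e)) * \<sigma> e e' * v (z,e'))
           - (\<Sum>e\<in>UNIV. \<Sum>e'\<in>UNIV. cnj (v (z,e)) * ptrace_Abar \<psi> (z,e) (z,e') * v (z,e'))"
        unfolding K_def by (simp add: sum_distrib_left sum_subtractf algebra_simps)
      then show "(\<Sum>e\<in>UNIV. \<Sum>e'\<in>UNIV. cnj (v (z,e)) * K z e e' * v (z,e'))
          = of_real (c0 * q\<sigma> (\<lambda>e. v (z,e)) - R z (\<lambda>e. v (z,e)))"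
        using pt qf\<sigma>[of "\<lambda>e. v (z,e)"] by simp
    qed
    also have "\<dots> = of_real (\<Sum>z\<in>U. c0 * q\<sigma> (\<lambda>e. v (z,e)) - R z (\<lambda>e. v (z,e)))"
      by (simp add: of_real_sum)
    finally have eq: "(\<Sum>i\<in>A_idx n \<times> UNIV. \<Sum>j\<in>A_idx n \<times> UNIV. cnj (v i) *
        (\<lambda>(z,e) (z',e'). complex_of_real (2 powr (- (real n - Hth))) * (if z = z' then 1 else 0) * \<sigma> e e'
                        - rho_AE n \<psi> (z,e) (z',e')) i j * v j)
      = of_real (\<Sum>z\<in>U. c0 * q\<sigma> (\<lambda>e. v (z,e)) - R z (\<lambda>e. v (z,e)))" .
    have nn: "(\<Sum>z\<in>U. c0 * q\<sigma> (\<lambda>e. v (z,e)) - R z (\<lambda>e. v (z,e))) \<ge> 0"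
      using R\<sigma> by (intro sum_nonneg) auto
    show "Im (\<Sum>i\<in>A_idx n \<times> UNIV. \<Sum>j\<in>A_idx n \<times> UNIV. cnj (v i) *
        (\<lambda>(z,e) (z',e'). complex_of_real (2 powr (- (real n - Hth))) * (if z = z' then 1 else 0) * \<sigma> e e'
                        - rho_AE n \<psi> (z,e) (z',e')) i j * v j) = 0 \<and>
      0 \<le> Re (\<Sum>i\<in>A_idx n \<times> UNIV. \<Sum>j\<in>A_idx n \<times> UNIV. cnj (v i) *
        (\<lambda>(z,e) (z',e'). complex_of_real (2 powr (- (real n - Hth))) * (if z = z' then 1 else 0) * \<sigma> e e'
                        - rho_AE n \<psi> (z,e) (z',e')) i j * v j)"
      unfolding eq using nn by simp
  qed
  have mem: "ereal (real n - Hth) \<in> {ereal l | l::real. \<exists>\<sigma>. density \<sigma> \<and>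
     psd_on (A_idx n \<times> UNIV)
       (\<lambda>(z,e) (z',e'). complex_of_real (2 powr (-l)) * (if z = z' then 1 else 0) * \<sigma> e e'
                        - rho_AE n \<psi> (z,e) (z',e'))}"
    using dens psd by blast
  show ?thesis unfolding Hmin_def by (rule Sup_upper[OF mem])
qed

end
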